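(* Let $H_{ij}$, $i=1,\ldots,b$, $j=1,\ldots,s_i$, be $n=\sum_i s_i$ null hypotheses with $p$-values $P_{ij}$, where true-null $p$-values are $U(0,1)$ and the rows $(P_{i1},\ldots,P_{is_i})$, $i=1,\ldots,b$, are mutually independent (arbitrary dependence within rows). Let $n_0\ge1$ be the number of true nulls, $s_{\max}=\max_i s_i$, and $R(\lambda)=\sum_{i=1}^b\sum_{j=1}^{s_i}I(P_{ij}\le\lambda)$. For any $\lambda$ with $(2b+3)^{-2/(b+2)}\le\lambda<1$, the estimator $$\widehat n_0^{(1)}(\mathbf P)=\frac{n-R(\lambda)+s_{\max}}{1-\lambda}$$ satisfies Property 1, i.e. it is non-decreasing in each $P_{ij}$ and $$\sum_{i=1}^b\sum_{j=1}^{s_i}I(H_{ij}=0)\,E_{DU}\left\{\frac{1}{\widehat n_0^{(1)}(\mathbf P^{(-i)},\mathbf 0)}\right\}\le 1.$$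
   Context: $H_{ij}=0$ means $H_{ij}$ is true. $\mathbf P=((P_{ij}))$ is the collection of all $p$-values; $\mathbf P^{(-i)}$ is the collection with the $i$th row deleted, and $\widehat n_0(\mathbf P^{(-i)},\mathbf 0)$ is the value of $\widehat n_0(\mathbf P)$ when all entries of the $i$th row are replaced by $0$. $E_{DU}$ denotes expectation under the Dirac-uniform configuration of $\mathbf P^{(-i)}$: the $p$-values in $\mathbf P^{(-i)}$ corresponding to false null hypotheses are set to $0$, and the remaining ones are $U(0,1)$ distributed, with the rows still mutually independent. An estimator $\widehat n_0(\mathbf P)$ is said to satisfy Property 1 if it is non-decreasing in each $P_{ij}$ and satisfies the displayed inequality. *)

theory Defs
  imports "HOL-Probability.Probability"
begin

text \<open>Hypotheses are indexed by (i,j) with i < b (rows / blocks) and j < s i.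
  H i j = True means the null hypothesis H_ij is true (H_ij = 0 in the paper).\<close>

definition n_total :: "nat \<Rightarrow> (nat \<Rightarrow> nat) \<Rightarrow> nat" where
  "n_total b s = (\<Sum>i<b. s i)"

definition n_true :: "nat \<Rightarrow> (nat \<Rightarrow> nat) \<Rightarrow> (nat \<Rightarrow> nat \<Rightarrow> bool) \<Rightarrow> nat" where
  "n_true b s H = card {(i, j). i < b \<and> j < s i \<and> H i j}"

definition s_max :: "nat \<Rightarrow> (nat \<Rightarrow> nat) \<Rightarrow> nat" where
  "s_max b s = Max (s ` {..<b})"

definition R_count :: "nat \<Rightarrow> (nat \<Rightarrow> nat) \<Rightarrow> real \<Rightarrow> (nat \<Rightarrow> nat \<Rightarrow> real) \<Rightarrow> real" where
  "R_count b s lam P = (\<Sum>i<b. \<Sum>j<s i. if P i j \<le> lam then 1 else 0)"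

definition n0hat1 :: "nat \<Rightarrow> (nat \<Rightarrow> nat) \<Rightarrow> real \<Rightarrow> (nat \<Rightarrow> nat \<Rightarrow> real) \<Rightarrow> real" where
  "n0hat1 b s lam P = (real (n_total b s) - R_count b s lam P + real (s_max b s)) / (1 - lam)"

definition coordwise_mono ::
  "nat \<Rightarrow> (nat \<Rightarrow> nat) \<Rightarrow> ((nat \<Rightarrow> nat \<Rightarrow> real) \<Rightarrow> real) \<Rightarrow> bool" where
  "coordwise_mono b s est \<longleftrightarrow>
     (\<forall>P i j x y. i < b \<longrightarrow> j < s i \<longrightarrow> x \<le> y \<longrightarrow>
        est (P(i := (P i)(j := x))) \<le> est (P(i := (P i)(j := y))))"

text \<open>Dirac-uniform configuration of P^(-i) with the i-th row replaced by 0: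
  omega k is a realisation of row k; false-null p-values are set to 0, true-null
  ones are taken from omega, and row i is set to 0.\<close>
definition DU_minus :: "(nat \<Rightarrow> nat \<Rightarrow> bool) \<Rightarrow> nat \<Rightarrow> (nat \<Rightarrow> nat \<Rightarrow> real) \<Rightarrow> (nat \<Rightarrow> nat \<Rightarrow> real)" where
  "DU_minus H i \<omega> = (\<lambda>k j. if k = i then 0 else if H k j then \<omega> k j else 0)"

text \<open>Product (independent rows) of the row laws M k.\<close>
definition DU_space :: "nat \<Rightarrow> (nat \<Rightarrow> (nat \<Rightarrow> real) measure) \<Rightarrow> (nat \<Rightarrow> nat \<Rightarrow> real) measure" where
  "DU_space b M = PiM {..<b} M"

text \<open>Property 1, relative to the row laws M (of which only the joint law of the
  true-null coordinates matters).  E_DU is the Lebesgue integral over the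
  product of the rows; we also require integrability so that the expectation is
  genuinely defined.\<close>
definition property1 ::
  "nat \<Rightarrow> (nat \<Rightarrow> nat) \<Rightarrow> (nat \<Rightarrow> nat \<Rightarrow> bool) \<Rightarrow> (nat \<Rightarrow> (nat \<Rightarrow> real) measure)
     \<Rightarrow> ((nat \<Rightarrow> nat \<Rightarrow> real) \<Rightarrow> real) \<Rightarrow> bool" where
  "property1 b s H M est \<longleftrightarrow>
     coordwise_mono b s est \<and>
     (\<forall>i<b. integrable (DU_space b M) (\<lambda>\<omega>. 1 / est (DU_minus H i \<omega>))) \<and>
     (\<Sum>i<b. \<Sum>j<s i. (if H i j then 1 else 0) *
         integral\<^sup>L (DU_space b M) (\<lambda>\<omega>. 1 / est (DU_minus H i \<omega>))) \<le> (1::real)"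

end

theory Submission
  imports Defs
begin

lemma (in product_sigma_finite) indep_mult:
  fixes f :: "'a \<Rightarrow> real" and g :: "('i \<Rightarrow> 'a) \<Rightarrow> real"
  assumes I: "finite I" "i \<notin> I"
    and int1: "integrable (Pi\<^sub>M (insert i I) M) (\<lambda>\<omega>. f (\<omega> i) * g \<omega>)"
    and int2: "integrable (Pi\<^sub>M (insert i I) M) g"
    and gi: "\<And>x y. g (x(i := y)) = g x"
    and pi: "prob_space (M i)"
  shows "(\<integral>\<omega>. f (\<omega> i) * g \<omega> \<partial>Pi\<^sub>M (insert i I) M) = integral\<^sup>L (M i) f * integral\<^sup>L (Pi\<^sub>M (insert i I) M) g"
proof -
  have "(\<integral>\<omega>. f (\<omega> i) * g \<omega> \<partial>Pi\<^sub>M (insert i I) M) = (\<integral>x. (\<integral>y. f y * g x \<partial>M i) \<partial>Pi\<^sub>M I M)"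
    using product_integral_insert[OF I int1] by (simp add: gi)
  also have "\<dots> = (\<integral>x. integral\<^sup>L (M i) f * g x \<partial>Pi\<^sub>M I M)"
    by simp
  also have "\<dots> = integral\<^sup>L (M i) f * (\<integral>x. g x \<partial>Pi\<^sub>M I M)"
    by simp
  also have "(\<integral>x. g x \<partial>Pi\<^sub>M I M) = (\<integral>x. (\<integral>y. g (x(i:=y)) \<partial>M i) \<partial>Pi\<^sub>M I M)"
    by (simp add: gi prob_space.prob_space[OF pi])
  also have "\<dots> = integral\<^sup>L (Pi\<^sub>M (insert i I) M) g"
    using product_integral_insert[OF I int2] by simp
  finally show ?thesis .
qed
theorem mainTheorem2:
  fixes b :: nat and s :: "nat \<Rightarrow> nat" and H :: "nat \<Rightarrow> nat \<Rightarrow> bool"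
    and M :: "nat \<Rightarrow> (nat \<Rightarrow> real) measure" and lam :: real
  assumes sizes: "\<And>i. i < b \<Longrightarrow> s i \<ge> 1"
    and n0: "n_true b s H \<ge> 1"
    and rows_prob: "\<And>i. i < b \<Longrightarrow> prob_space (M i)"
    and rows_sets: "\<And>i. i < b \<Longrightarrow> sets (M i) = sets (PiM {..<s i} (\<lambda>_. borel))"
    and null_unif: "\<And>i j. i < b \<Longrightarrow> j < s i \<Longrightarrow> H i j \<Longrightarrow>
                       distr (M i) borel (\<lambda>x. x j) = uniform_measure lborel {0..1}"
    and lam_lo: "(2 * real b + 3) powr (- 2 / (real b + 2)) \<le> lam"
    and lam_hi: "lam < 1"
  shows "property1 b s H M (n0hat1 b s lam)"
proof -
  have lam0: "0 < lam"
    using lam_lo powr_gt_zero[of "2 * real b + 3" "- 2 / (real b + 2)"] by linarith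
  have b0: "0 < b"
  proof (rule ccontr)
    assume "\<not> 0 < b"
    then have "b = 0" by simp
    then show False using n0 by (simp add: n_true_def)
  qed
  define y where "y k x = (\<Sum>j<s k. if H k j \<and> lam < x j then 1 else 0::real)" for k and x :: "nat \<Rightarrow> real"
  define S where "S = real (s_max b s)"
  define T where "T i \<omega> = (\<Sum>k\<in>{..<b}-{i}. y k (\<omega> k))" for i and \<omega> :: "nat \<Rightarrow> nat \<Rightarrow> real"
  define m where "m i = (\<Sum>j<s i. if H i j then 1 else 0::real)" for i
  have sS: "real (s k) \<le> S" if "k < b" for k
    using that by (auto simp: S_def s_max_def)
  have S1: "1 \<le> S" using sS[OF b0] sizes[OF b0] by linarith
  have y0: "0 \<le> y k x" for k x unfolding y_def by (intro sum_nonneg) auto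
  have ys: "y k x \<le> real (s k)" for k x
  proof -
    have "y k x \<le> (\<Sum>j<s k. 1)" unfolding y_def by (intro sum_mono) auto
    then show ?thesis by simp
  qed
  have T0: "0 \<le> T i \<omega>" for i \<omega> unfolding T_def by (intro sum_nonneg y0)
  have row: "(\<Sum>j<s k. if DU_minus H i \<omega> k j \<le> lam then 1 else 0::real)
      = real (s k) - (if k = i then 0 else y k (\<omega> k))" for k i \<omega>
  proof (cases "k = i")
    case True then show ?thesis using lam0 by (simp add: DU_minus_def)
  next
    case False
    have "(\<Sum>j<s k. if DU_minus H i \<omega> k j \<le> lam then 1 else 0::real)
        = (\<Sum>j<s k. 1 - (if H k j \<and> lam < \<omega> k j then 1 else 0))"
      using False lam0 by (intro sum.cong) (auto simp: DU_minus_def)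
    also have "\<dots> = real (s k) - y k (\<omega> k)" by (simp add: sum_subtractf y_def)
    finally show ?thesis using False by simp
  qed
  have est: "n0hat1 b s lam (DU_minus H i \<omega>) = (S + T i \<omega>) / (1 - lam)" if "i < b" for i \<omega>
  proof -
    have "R_count b s lam (DU_minus H i \<omega>) = (\<Sum>k<b. real (s k) - (if k = i then 0 else y k (\<omega> k)))"
      unfolding R_count_def by (simp add: row)
    also have "\<dots> = real (n_total b s) - T i \<omega>"
    proof -
      have "(\<Sum>k<b. (if k = i then 0 else y k (\<omega> k))) = T i \<omega>"
        unfolding T_def using that by (simp add: sum.If_cases Diff_eq Int_commute)
      then show ?thesis by (simp add: sum_subtractf n_total_def)
    qed
    finally show ?thesis by (simp add: n0hat1_def S_def)
  qed
  have inv: "1 / n0hat1 b s lam (DU_minus H i \<omega>) = (1 - lam) / (S + T i \<omega>)" if "i < b" for i \<omega>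
    using est[OF that] by simp
  have Rmono: "R_count b s lam P \<le> R_count b s lam Q" if "\<And>k l. Q k l \<le> P k l" for P Q
    unfolding R_count_def using that by (intro sum_mono) (auto intro: order_trans)
  have mono: "coordwise_mono b s (n0hat1 b s lam)"
    unfolding coordwise_mono_def n0hat1_def
  proof (intro allI impI)
    fix P :: "nat \<Rightarrow> nat \<Rightarrow> real" and i j :: nat and u v :: real
    assume "u \<le> v"
    then have "R_count b s lam (P(i := (P i)(j := v))) \<le> R_count b s lam (P(i := (P i)(j := u)))"
      by (intro Rmono) auto
    then show "(real (n_total b s) - R_count b s lam (P(i := (P i)(j := u))) + real (s_max b s)) / (1 - lam)
        \<le> (real (n_total b s) - R_count b s lam (P(i := (P i)(j := v))) + real (s_max b s)) / (1 - lam)"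
      using lam_hi by (intro divide_right_mono) auto
  qed
  define M' where "M' i = (if i < b then M i else count_space {undefined})" for i
  have pM': "prob_space (M' i)" for i
    by (auto simp: M'_def rows_prob intro!: prob_spaceI)
  interpret PP: product_sigma_finite M'
    by (simp add: product_sigma_finite_def pM' prob_space_imp_sigma_finite)
  define \<Omega> where "\<Omega> = PiM {..<b} M'"
  have DU: "DU_space b M = \<Omega>"
    unfolding DU_space_def \<Omega>_def by (rule PiM_cong) (auto simp: M'_def)
  interpret Q: prob_space \<Omega>
    unfolding \<Omega>_def by (rule prob_space_PiM) (simp add: pM')
  have compM: "(\<lambda>x. x j) \<in> borel_measurable (M k)" if "k < b" "j < s k" for k j
  proof -
    have "(\<lambda>x. x j) \<in> measurable (PiM {..<s k} (\<lambda>_. borel)) (borel :: real measure)"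
      using that by (intro measurable_component_singleton) auto
    then show ?thesis using measurable_cong_sets[OF rows_sets[OF that(1)] refl, where N="borel :: real measure"] by simp
  qed
  have comp: "(\<lambda>\<omega>. \<omega> k j) \<in> borel_measurable \<Omega>" if "k < b" "j < s k" for k j
  proof -
    have "(\<lambda>\<omega>. \<omega> k) \<in> measurable \<Omega> (M' k)"
      unfolding \<Omega>_def using that by (intro measurable_component_singleton) auto
    then have "(\<lambda>\<omega>. \<omega> k) \<in> measurable \<Omega> (M k)" using that by (simp add: M'_def)
    from measurable_compose[OF this compM[OF that]] show ?thesis .
  qed
  have yM: "y k \<in> borel_measurable (M k)" if "k < b" for k
    unfolding y_def
  proof (rule borel_measurable_sum)
    fix j assume "j \<in> {..<s k}"
    then have [measurable]: "(\<lambda>x. x j) \<in> borel_measurable (M k)" using compM that by auto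
    show "(\<lambda>x. if H k j \<and> lam < x j then 1 else 0::real) \<in> borel_measurable (M k)"
      by (cases "H k j") auto
  qed
  have ymeas: "(\<lambda>\<omega>. y k (\<omega> k)) \<in> borel_measurable \<Omega>" if "k < b" for k
    unfolding y_def
  proof (rule borel_measurable_sum)
    fix j assume "j \<in> {..<s k}"
    then have [measurable]: "(\<lambda>\<omega>. \<omega> k j) \<in> borel_measurable \<Omega>" using comp that by auto
    show "(\<lambda>\<omega>. if H k j \<and> lam < \<omega> k j then 1 else 0::real) \<in> borel_measurable \<Omega>"
      by (cases "H k j") auto
  qed
  have Tmeas: "T i \<in> borel_measurable \<Omega>" for i
    unfolding T_def by (intro borel_measurable_sum) (auto intro: ymeas)
  define F where "F i \<omega> = (1 - lam) / (S + T i \<omega>)" for i \<omega>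
  define St where "St \<omega> = (\<Sum>k<b. y k (\<omega> k))" for \<omega>
  define G where "G i \<omega> = y i (\<omega> i) / St \<omega>" for i \<omega>
  have Stmeas: "St \<in> borel_measurable \<Omega>"
    unfolding St_def by (intro borel_measurable_sum) (auto intro: ymeas)
  have St_split: "St \<omega> = y i (\<omega> i) + T i \<omega>" if "i < b" for i \<omega>
    unfolding St_def T_def using that by (subst sum.remove[of _ i]) auto
  have Fint: "integrable \<Omega> (F i)" for i
  proof (rule Q.integrable_const_bound[where B=1])
    show "AE x in \<Omega>. norm (F i x) \<le> 1"
    proof (rule AE_I2)
      fix x
      have "0 \<le> F i x" "F i x \<le> 1"
        using T0[of i x] S1 lam_hi lam0 by (auto simp: F_def divide_le_eq)
      then show "norm (F i x) \<le> 1" by simp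
    qed
    show "F i \<in> borel_measurable \<Omega>" unfolding F_def using Tmeas by measurable
  qed
  have Gb: "0 \<le> G i \<omega> \<and> G i \<omega> \<le> 1" if "i < b" for i \<omega>
    using St_split[OF that, of \<omega>] y0[of i "\<omega> i"] T0[of i \<omega>]
    by (auto simp: G_def divide_le_eq)
  have Gint: "integrable \<Omega> (G i)" if "i < b" for i
  proof (rule Q.integrable_const_bound[where B=1])
    show "AE x in \<Omega>. norm (G i x) \<le> 1"
      using Gb[OF that] by (intro AE_I2) auto
    show "G i \<in> borel_measurable \<Omega>" unfolding G_def using Stmeas ymeas[OF that] by measurable
  qed
  have Eyi: "integral\<^sup>L (M i) (y i) = m i * (1 - lam)" if "i < b" for i
  proof -
    interpret Mi: prob_space "M i" using rows_prob[OF that] .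
    have trm: "integral\<^sup>L (M i) (\<lambda>x. if H i j \<and> lam < x j then 1 else 0::real)
       = (if H i j then 1 else 0) * (1 - lam)" if j: "j < s i" for j
    proof (cases "H i j")
      case False then show ?thesis by simp
    next
      case True
      have "integral\<^sup>L (M i) (\<lambda>x. if H i j \<and> lam < x j then 1 else 0::real)
          = integral\<^sup>L (M i) (\<lambda>x. indicator {lam<..} (x j))"
        using True by (intro Bochner_Integration.integral_cong) (auto simp: indicator_def)
      also have "\<dots> = integral\<^sup>L (distr (M i) borel (\<lambda>x. x j)) (indicator {lam<..})"
        using compM[OF \<open>i < b\<close> j] by (subst integral_distr) auto
      also have "\<dots> = integral\<^sup>L (uniform_measure lborel {0..1}) (indicator {lam<..})"
        using null_unif[OF \<open>i < b\<close> j True] by simp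
      also have "\<dots> = measure lborel ({0..1} \<inter> {lam<..}) / measure lborel {0..(1::real)}"
        by simp
      also have "{0..1} \<inter> {lam<..} = {lam<..(1::real)}" using lam0 by auto
      also have "measure lborel {lam<..(1::real)} = 1 - lam" using lam_hi by simp
      finally show ?thesis using True by simp
    qed
    have "integral\<^sup>L (M i) (y i) = (\<Sum>j<s i. integral\<^sup>L (M i) (\<lambda>x. if H i j \<and> lam < x j then 1 else 0::real))"
      unfolding y_def
    proof (rule Bochner_Integration.integral_sum)
      fix j assume "j \<in> {..<s i}"
      then have [measurable]: "(\<lambda>x. x j) \<in> borel_measurable (M i)" using compM that by auto
      show "integrable (M i) (\<lambda>x. if H i j \<and> lam < x j then 1 else 0::real)"
      proof (rule Mi.integrable_const_bound[where B=1])
        show "AE x in M i. norm (if H i j \<and> lam < x j then 1 else 0::real) \<le> 1" by (intro AE_I2) auto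
        show "(\<lambda>x. if H i j \<and> lam < x j then 1 else 0::real) \<in> borel_measurable (M i)"
          by (cases "H i j") auto
      qed
    qed
    also have "\<dots> = (\<Sum>j<s i. (if H i j then 1 else 0) * (1 - lam))"
      by (intro sum.cong) (auto simp: trm)
    finally show ?thesis by (simp add: m_def sum_distrib_right)
  qed
  have key: "m i * integral\<^sup>L \<Omega> (F i) \<le> integral\<^sup>L \<Omega> (G i)" if "i < b" for i
  proof -
    define g where "g \<omega> = 1 / (S + T i \<omega>)" for \<omega>
    have gb: "0 \<le> g \<omega> \<and> g \<omega> \<le> 1" for \<omega>
      using T0[of i \<omega>] S1 by (auto simp: g_def divide_le_eq)
    have gmeas: "g \<in> borel_measurable \<Omega>" unfolding g_def using Tmeas by measurable
    have gint: "integrable \<Omega> g"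
      by (rule Q.integrable_const_bound[where B=1]) (use gb gmeas in \<open>auto intro!: AE_I2\<close>)
    have ygint: "integrable \<Omega> (\<lambda>\<omega>. y i (\<omega> i) * g \<omega>)"
    proof (rule Q.integrable_const_bound[where B=S])
      show "AE x in \<Omega>. norm (y i (x i) * g x) \<le> S"
      proof (rule AE_I2)
        fix x
        have "y i (x i) * g x \<le> S * 1"
          using gb[of x] y0[of i "x i"] ys[of i "x i"] sS[OF that]
          by (intro mult_mono) auto
        then show "norm (y i (x i) * g x) \<le> S" using gb[of x] y0[of i "x i"] by simp
      qed
      show "(\<lambda>\<omega>. y i (\<omega> i) * g \<omega>) \<in> borel_measurable \<Omega>" using gmeas ymeas[OF that] by measurable
    qed
    have ins: "insert i ({..<b} - {i}) = {..<b}" using that by auto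
    have gi: "g (x(i := z)) = g x" for x z
      unfolding g_def T_def by (auto intro!: sum.cong arg_cong[where f="\<lambda>t. 1 / (S + t)"])
    have indep: "(\<integral>\<omega>. y i (\<omega> i) * g \<omega> \<partial>\<Omega>) = integral\<^sup>L (M' i) (y i) * integral\<^sup>L \<Omega> g"
      using PP.indep_mult[where I="{..<b} - {i}" and i=i and f="y i" and g=g] ygint gint gi pM'
      unfolding \<Omega>_def ins by simp
    have "m i * integral\<^sup>L \<Omega> (F i) = m i * ((1 - lam) * integral\<^sup>L \<Omega> g)"
    proof -
      have "F i = (\<lambda>\<omega>. (1 - lam) * g \<omega>)" by (auto simp: F_def g_def)
      then show ?thesis by simp
    qed
    also have "\<dots> = integral\<^sup>L (M' i) (y i) * integral\<^sup>L \<Omega> g"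
      using Eyi[OF that] that by (simp add: M'_def)
    also have "\<dots> = (\<integral>\<omega>. y i (\<omega> i) * g \<omega> \<partial>\<Omega>)" using indep by simp
    also have "\<dots> \<le> integral\<^sup>L \<Omega> (G i)"
    proof (rule integral_mono[OF ygint Gint[OF that]])
      fix \<omega>
      have a0: "0 \<le> y i (\<omega> i)" and aS: "y i (\<omega> i) \<le> S" and t0: "0 \<le> T i \<omega>"
        using y0 ys[of i "\<omega> i"] sS[OF that] T0 by (auto intro: order_trans)
      show "y i (\<omega> i) * g \<omega> \<le> G i \<omega>"
      proof (cases "y i (\<omega> i) = 0")
        case True then show ?thesis by (simp add: G_def)
      next
        case False
        then have ap: "0 < y i (\<omega> i)" using a0 by simp
        have "y i (\<omega> i) / (S + T i \<omega>) \<le> y i (\<omega> i) / (y i (\<omega> i) + T i \<omega>)"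
          using ap aS t0 by (intro divide_left_mono) auto
        then show ?thesis by (simp add: G_def g_def St_split[OF that])
      qed
    qed
    finally show ?thesis .
  qed
  have final: "(\<Sum>i<b. \<Sum>j<s i. (if H i j then 1 else 0) * integral\<^sup>L \<Omega> (F i)) \<le> (1::real)"
  proof -
    have "(\<Sum>i<b. \<Sum>j<s i. (if H i j then 1 else 0) * integral\<^sup>L \<Omega> (F i)) = (\<Sum>i<b. m i * integral\<^sup>L \<Omega> (F i))"
      by (simp add: m_def sum_distrib_right)
    also have "\<dots> \<le> (\<Sum>i<b. integral\<^sup>L \<Omega> (G i))"
      by (intro sum_mono key) auto
    also have "\<dots> = integral\<^sup>L \<Omega> (\<lambda>\<omega>. \<Sum>i<b. G i \<omega>)"
      by (rule Bochner_Integration.integral_sum[symmetric]) (auto intro: Gint)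
    also have "\<dots> \<le> integral\<^sup>L \<Omega> (\<lambda>\<omega>. 1)"
    proof (rule integral_mono)
      show "integrable \<Omega> (\<lambda>\<omega>. \<Sum>i<b. G i \<omega>)" by (auto intro: Gint)
      show "integrable \<Omega> (\<lambda>\<omega>. 1::real)" by simp
      fix \<omega>
      have "(\<Sum>i<b. G i \<omega>) = St \<omega> / St \<omega>"
        unfolding G_def by (simp add: sum_divide_distrib[symmetric] St_def)
      also have "\<dots> \<le> 1" by (cases "St \<omega> = 0") auto
      finally show "(\<Sum>i<b. G i \<omega>) \<le> 1" .
    qed
    also have "\<dots> = 1" by (simp add: Q.prob_space)
    finally show ?thesis .
  qed
  have Feq: "(\<lambda>\<omega>. 1 / n0hat1 b s lam (DU_minus H i \<omega>)) = F i" if "i < b" for i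
    using inv[OF that] by (auto simp: F_def)
  have "(\<Sum>i<b. \<Sum>j<s i. (if H i j then 1 else 0) * integral\<^sup>L \<Omega> (\<lambda>\<omega>. 1 / n0hat1 b s lam (DU_minus H i \<omega>)))
      = (\<Sum>i<b. \<Sum>j<s i. (if H i j then 1 else 0) * integral\<^sup>L \<Omega> (F i))"
    by (intro sum.cong refl) (simp add: Feq)
  then show ?thesis
    unfolding property1_def DU
    using mono Fint final Feq by simp
qed

end
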